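(* Let $L_x,L_z>0$ and $\mathcal{A}=\{[x,0,z]^{\mathsf{T}}:|x|\le L_x/2,\ |z|\le L_z/2\}$. For $k\in\{1,2\}$ let $r_k>0$, $\phi_k,\theta_k\in[0,\pi]$, $\Phi_k=\cos\phi_k\sin\theta_k$, $\Psi_k=\sin\phi_k\sin\theta_k$, $\Theta_k=\cos\theta_k$, and assume $\Psi_k>0$. Let $k_0>0$ and $$\mathsf{Q}_k(x,z)=\frac{\sqrt{r_k\Psi_k}\,e^{-\mathrm{j}k_0(x^2+z^2-2r_k(\Phi_kx+\Theta_kz)+r_k^2)^{1/2}}}{\sqrt{4\pi}\,(x^2+z^2-2r_k(\Phi_kx+\Theta_kz)+r_k^2)^{3/4}},\qquad \mathsf{g}_k=\int_{-L_z/2}^{L_z/2}\int_{-L_x/2}^{L_x/2}|\mathsf{Q}_k(x,z)|^2\mathrm{d}x\,\mathrm{d}z.$$ Then $$\mathsf{g}_k=\frac{1}{4\pi}\sum_{x\in\mathcal{X}_k}\sum_{z\in\mathcal{Z}_k}\arctan\!\left(\frac{xz/\Psi_k}{\sqrt{\Psi_k^2+x^2+z^2}}\right)\triangleq\mathsf{g}_k^{\mathsf{p}},$$ where $\mathcal{X}_k=\{\frac{L_x}{2r_k}+\Phi_k,\frac{L_x}{2r_k}-\Phi_k\}$ and $\mathcal{Z}_k=\{\frac{L_z}{2r_k}+\Theta_k,\frac{L_z}{2r_k}-\Theta_k\}$. Moreover, approximating each one-dimensional integral in $\rho=\frac{1}{\sqrt{\mathsf{g}_1\mathsf{g}_2}}\int_{-L_z/2}^{L_z/2}\int_{-L_x/2}^{L_x/2}\mathsf{Q}_1^*(x,z)\mathsf{Q}_2(x,z)\mathrm{d}x\,\mathrm{d}z$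 by the $n$-point Chebyshev–Gauss quadrature rule $\int_{-1}^1 f(t)\mathrm{d}t\approx\frac{\pi}{n}\sum_{j=1}^n\sqrt{1-\psi_j^2}f(\psi_j)$, $\psi_j=\cos\frac{(2j-1)\pi}{2n}$, gives $$\rho\approx\frac{\pi^2A}{4n^2\sqrt{\mathsf{g}_1^{\mathsf{p}}\mathsf{g}_2^{\mathsf{p}}}}\sum_{j=1}^n\sum_{j'=1}^n\sqrt{(1-\psi_j^2)(1-\psi_{j'}^2)}\,\mathsf{Q}_1^*\Big(\tfrac{L_x\psi_j}{2},\tfrac{L_z\psi_{j'}}{2}\Big)\mathsf{Q}_2\Big(\tfrac{L_x\psi_j}{2},\tfrac{L_z\psi_{j'}}{2}\Big)\triangleq\rho_{\mathsf{p}},$$ with $A=L_xL_z$.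
   Context: This is the planar continuous-aperture array in the $x$-$z$ plane centred at the origin; user $k$ is located at $\mathbf{s}_k=r_k[\Phi_k,\Psi_k,\Theta_k]^{\mathsf{T}}$, and $\mathsf{Q}_k(x,z)=\mathsf{G}_k([x,0,z]^{\mathsf{T}})$ where $\mathsf{G}_k(\mathbf{r})=\frac{e^{-\mathrm{j}k_0\|\mathbf{r}-\mathbf{s}_k\|}}{\sqrt{4\pi}\|\mathbf{r}-\mathbf{s}_k\|}\sqrt{\frac{|\mathbf{e}^{\mathsf{T}}(\mathbf{s}_k-\mathbf{r})|}{\|\mathbf{r}-\mathbf{s}_k\|}}$ with normal $\mathbf{e}=[0,1,0]^{\mathsf{T}}$; $\mathsf{g}_k$ is the channel gain and $\rho$ the channel correlation factor; $n$ is a complexity-vs-accuracy parameter. *)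

theory Defs
  imports "HOL-Analysis.Analysis"
begin

definition PhiD :: "real \<Rightarrow> real \<Rightarrow> real" where "PhiD phi theta = cos phi * sin theta"
definition PsiD :: "real \<Rightarrow> real \<Rightarrow> real" where "PsiD phi theta = sin phi * sin theta"
definition ThetaD :: "real \<Rightarrow> real \<Rightarrow> real" where "ThetaD phi theta = cos theta"

definition Dist2 :: "real \<Rightarrow> real \<Rightarrow> real \<Rightarrow> real \<Rightarrow> real \<Rightarrow> real" where
  "Dist2 r phi theta x z = x^2 + z^2 - 2 * r * (PhiD phi theta * x + ThetaD phi theta * z) + r^2"

definition Qch :: "real \<Rightarrow> real \<Rightarrow> real \<Rightarrow> real \<Rightarrow> real \<Rightarrow> real \<Rightarrow> complex" where
  "Qch k0 r phi theta x z =
     complex_of_real (sqrt (r * PsiD phi theta)) *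
     exp (- \<i> * complex_of_real (k0 * Dist2 r phi theta x z powr (1/2))) /
     complex_of_real (sqrt (4 * pi) * Dist2 r phi theta x z powr (3/4))"

definition gain :: "real \<Rightarrow> real \<Rightarrow> real \<Rightarrow> real \<Rightarrow> real \<Rightarrow> real \<Rightarrow> real" where
  "gain Lx Lz k0 r phi theta =
     integral {-Lz/2..Lz/2} (\<lambda>z. integral {-Lx/2..Lx/2} (\<lambda>x. (cmod (Qch k0 r phi theta x z))^2))"

text \<open>Closed form g^p; the sums over the two-element (multi)sets X_k, Z_k are written
  as sums over the signs s, s' in {1,-1}, so that coinciding values are still counted twice.\<close>
definition gain_p :: "real \<Rightarrow> real \<Rightarrow> real \<Rightarrow> real \<Rightarrow> real \<Rightarrow> real" where
  "gain_p Lx Lz r phi theta =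
     (let Ph = PhiD phi theta; Ps = PsiD phi theta; Th = ThetaD phi theta in
      1 / (4 * pi) * (\<Sum>s\<in>{1, -1::real}. \<Sum>s'\<in>{1, -1::real}.
        (let x = Lx / (2 * r) + s * Ph; z = Lz / (2 * r) + s' * Th in
          arctan ((x * z / Ps) / sqrt (Ps^2 + x^2 + z^2)))))"

definition corr :: "real \<Rightarrow> real \<Rightarrow> real \<Rightarrow> real \<Rightarrow> real \<Rightarrow> real \<Rightarrow> real \<Rightarrow> real \<Rightarrow> real \<Rightarrow> complex" where
  "corr Lx Lz k0 r1 phi1 theta1 r2 phi2 theta2 =
     complex_of_real (1 / sqrt (gain Lx Lz k0 r1 phi1 theta1 * gain Lx Lz k0 r2 phi2 theta2)) *
     integral {-Lz/2..Lz/2} (\<lambda>z. integral {-Lx/2..Lx/2}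
        (\<lambda>x. cnj (Qch k0 r1 phi1 theta1 x z) * Qch k0 r2 phi2 theta2 x z))"

definition cheb_node :: "nat \<Rightarrow> nat \<Rightarrow> real" where
  "cheb_node n j = cos ((2 * real j - 1) * pi / (2 * real n))"

definition cheb_gauss :: "nat \<Rightarrow> (real \<Rightarrow> complex) \<Rightarrow> complex" where
  "cheb_gauss n f = complex_of_real (pi / real n) *
     (\<Sum>j = 1..n. complex_of_real (sqrt (1 - (cheb_node n j)^2)) * f (cheb_node n j))"

definition corr_p :: "nat \<Rightarrow> real \<Rightarrow> real \<Rightarrow> real \<Rightarrow> real \<Rightarrow> real \<Rightarrow> real \<Rightarrow> real \<Rightarrow> real \<Rightarrow> real \<Rightarrow> complex" where
  "corr_p n Lx Lz k0 r1 phi1 theta1 r2 phi2 theta2 =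
     complex_of_real (pi^2 * (Lx * Lz) /
        (4 * (real n)^2 * sqrt (gain_p Lx Lz r1 phi1 theta1 * gain_p Lx Lz r2 phi2 theta2))) *
     (\<Sum>j = 1..n. \<Sum>j' = 1..n.
        complex_of_real (sqrt ((1 - (cheb_node n j)^2) * (1 - (cheb_node n j')^2))) *
        cnj (Qch k0 r1 phi1 theta1 (Lx * cheb_node n j / 2) (Lz * cheb_node n j' / 2)) *
        Qch k0 r2 phi2 theta2 (Lx * cheb_node n j / 2) (Lz * cheb_node n j' / 2))"

end

theory Submission
  imports Defs
begin



lemma scale_int:
  fixes f :: "real \<Rightarrow> 'b::real_normed_vector"
  assumes L: "L > 0"
  shows "integral {-L/2..L/2} f = (L/2) *\<^sub>R integral {-1..1} (\<lambda>t. f (L*t/2))"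
proof -
  have iff: "((\<lambda>t. f (L*t/2)) has_integral (I /\<^sub>R (L/2))) {-1..1} \<longleftrightarrow> (f has_integral I) {-L/2..L/2}" for I
  proof -
    have "((\<lambda>x. f ((L/2) *\<^sub>R x + 0)) has_integral (I /\<^sub>R (L/2) ^ DIM(real)))
               (cbox ((-L/2 - 0) /\<^sub>R (L/2)) ((L/2 - 0) /\<^sub>R (L/2))) \<longleftrightarrow>
           (f has_integral I) (cbox (-L/2) (L/2))"
      by (rule has_integral_affinity_iff) (use L in simp)
    moreover have "(-L/2 - 0) /\<^sub>R (L/2) = -1" "(L/2 - 0) /\<^sub>R (L/2) = 1" using L by auto
    ultimately show ?thesis by (simp add: mult.commute)
  qed
  show ?thesis
  proof (cases "f integrable_on {-L/2..L/2}")
    case True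
    then obtain I where I: "(f has_integral I) {-L/2..L/2}" by blast
    hence "((\<lambda>t. f (L*t/2)) has_integral (I /\<^sub>R (L/2))) {-1..1}" using iff by blast
    with I L show ?thesis by (simp add: integral_unique)
  next
    case False
    have "\<not> (\<lambda>t. f (L*t/2)) integrable_on {-1..1}"
    proof
      assume "(\<lambda>t. f (L*t/2)) integrable_on {-1..1}"
      then obtain J where J: "((\<lambda>t. f (L*t/2)) has_integral J) {-1..1}" by blast
      have "J = ((L/2) *\<^sub>R J) /\<^sub>R (L/2)" using L by simp
      with J iff have "(f has_integral ((L/2) *\<^sub>R J)) {-L/2..L/2}" by metis
      with False show False by blast
    qed
    with False show ?thesis by (simp add: not_integrable_integral)
  qed
qed



lemma alg1:
  fixes R B u :: real assumes "R > 0" "B > 0" "R^2 = u^2 + B"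
  shows "(1 * (B * R) - u * (B * (inverse R / 2 * (2 * u)))) / (B * R * (B * R)) = 1 / (R^2 * R)"
proof -
  have "1 * (B * R) - u * (B * (inverse R / 2 * (2 * u))) = B * (R^2 - u^2) / R"
    using assms by (simp add: field_simps power2_eq_square)
  also have "\<dots> = B * B / R" using assms by simp
  finally have e: "1 * (B * R) - u * (B * (inverse R / 2 * (2 * u))) = B * B / R" .
  have "B * B / R / (B * R * (B * R)) = 1 / (R^2 * R)" using assms(1,2) by (simp add: field_simps power2_eq_square)
  with e show ?thesis by simp
qed

lemma der_inner:
  fixes a B x :: real assumes B: "B > 0"
  shows "((\<lambda>x. (x-a)/(B * sqrt((x-a)^2+B))) has_real_derivative 1/(((x-a)^2+B) * sqrt((x-a)^2+B))) (at x)"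
proof -
  define R where "R = sqrt((x-a)^2+B)"
  have P: "(x-a)^2+B > 0" using B by (simp add: add_nonneg_pos)
  hence R: "R > 0" "R^2 = (x-a)^2+B" unfolding R_def by auto
  have d1: "((\<lambda>x. (x-a)^2+B) has_real_derivative 2*(x-a)) (at x)"
    by (auto intro!: derivative_eq_intros)
  have d2: "((\<lambda>x. sqrt((x-a)^2+B)) has_real_derivative inverse (sqrt((x-a)^2+B))/2 * (2*(x-a))) (at x)"
    by (rule DERIV_chain2[OF DERIV_real_sqrt[OF P] d1])
  have d0: "((\<lambda>x. x-a) has_real_derivative 1) (at x)"
    by (auto intro!: derivative_eq_intros)
  have d3: "((\<lambda>x. B * sqrt((x-a)^2+B)) has_real_derivative B * (inverse (sqrt((x-a)^2+B))/2 * (2*(x-a)))) (at x)"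
    by (rule DERIV_cmult[OF d2])
  have nz: "B * sqrt((x-a)^2+B) \<noteq> 0" using B P by simp
  note d4 = DERIV_divide[OF d0 d3 nz]
  show ?thesis
    apply (rule DERIV_cong[OF d4])
    unfolding R_def[symmetric] unfolding R(2)[symmetric]
    by (rule alg1[OF R(1) B R(2)])
qed


lemma alg2:
  fixes R c U v :: real assumes R: "R > 0" and c: "c > 0" and RR: "R^2 = U^2 + v^2 + c^2"
  shows "inverse (1 + (U * v / (c * R))^2) * ((U * (c * R) - U * v * (c * (inverse R / 2 * (2 * v)))) / (c * R * (c * R))) / c
     = U / ((v^2 + c^2) * R)"
proof -
  have n1: "U * (c * R) - U * v * (c * (inverse R / 2 * (2 * v))) = U * c * (R^2 - v^2) / R"
    using R c by (simp add: field_simps power2_eq_square)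
  have n2: "R^2 - v^2 = U^2 + c^2" using RR by simp
  have w1: "1 + (U * v / (c * R))^2 = (c^2 * R^2 + U^2 * v^2) / (c^2 * R^2)"
    using R c by (simp add: field_simps power2_eq_square)
  have w2: "c^2 * R^2 + U^2 * v^2 = (U^2 + c^2) * (v^2 + c^2)"
    using RR by (simp add: algebra_simps power2_eq_square)
  have p1: "U^2 + c^2 > 0" "v^2 + c^2 > 0" using c by (simp_all add: add_nonneg_pos)
  have "inverse (1 + (U * v / (c * R))^2) * ((U * (c * R) - U * v * (c * (inverse R / 2 * (2 * v)))) / (c * R * (c * R))) / c
     = (c^2 * R^2) / ((U^2 + c^2) * (v^2 + c^2)) * (U * c * (U^2 + c^2) / R / (c * R * (c * R))) / c"
    unfolding n1 n2 w1 w2 by (simp add: inverse_eq_divide)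
  also have "\<dots> = U / ((v^2 + c^2) * R)"
  proof -
    have gen: "(c^2 * R^2) / (P * Q) * (U * c * P / R / (c * R * (c * R))) / c = U / (Q * R)"
      if "P > 0" "Q > 0" for P Q :: real using that R c by (simp add: field_simps power2_eq_square)
    show ?thesis by (rule gen[OF p1])
  qed
  finally show ?thesis .
qed

lemma der_outer:
  fixes U b c z :: real assumes c: "c > 0"
  shows "((\<lambda>z. arctan (U * (z-b) / (c * sqrt(U^2+(z-b)^2+c^2))) / c) has_real_derivative
     U / (((z-b)^2+c^2) * sqrt(U^2+(z-b)^2+c^2))) (at z)"
proof -
  define R where "R = sqrt(U^2+(z-b)^2+c^2)"
  have P: "U^2+(z-b)^2+c^2 > 0" using c by (simp add: add_nonneg_pos)
  hence R: "R > 0" "R^2 = U^2+(z-b)^2+c^2" unfolding R_def by auto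
  have d1: "((\<lambda>z. U^2+(z-b)^2+c^2) has_real_derivative 2*(z-b)) (at z)"
    by (auto intro!: derivative_eq_intros)
  note d2 = DERIV_chain2[OF DERIV_real_sqrt[OF P] d1]
  have d0: "((\<lambda>z. U*(z-b)) has_real_derivative U) (at z)"
    by (auto intro!: derivative_eq_intros)
  note d3 = DERIV_cmult[OF d2, of c]
  have nz: "c * sqrt(U^2+(z-b)^2+c^2) \<noteq> 0" using c P by simp
  note d4 = DERIV_divide[OF d0 d3 nz]
  note d5 = DERIV_chain2[OF DERIV_arctan d4]
  note d6 = DERIV_cdivide[OF d5, of c]
  show ?thesis
    apply (rule DERIV_cong[OF d6])
    unfolding R_def[symmetric]
    by (rule alg2[OF R(1) c R(2)])
qed


lemma Dist2_eq:
  "Dist2 r phi theta x z = (x - r * PhiD phi theta)^2 + (z - r * ThetaD phi theta)^2 + (r * PsiD phi theta)^2"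
proof -
  have "(cos phi * sin theta)^2 + (sin phi * sin theta)^2 + (cos theta)^2 = 1"
  proof -
    have "(cos phi * sin theta)^2 + (sin phi * sin theta)^2 = ((sin phi)^2 + (cos phi)^2) * (sin theta)^2"
      by algebra
    also have "\<dots> = (sin theta)^2" by simp
    finally show ?thesis by simp
  qed
  hence e: "r^2 = r^2 * ((cos phi * sin theta)^2 + (sin phi * sin theta)^2 + (cos theta)^2)" by simp
  show ?thesis unfolding Dist2_def PhiD_def PsiD_def ThetaD_def
    by (subst e) (simp add: algebra_simps power2_eq_square)
qed

lemma normQ:
  assumes D: "Dist2 r phi theta x z > 0" and rp: "r * PsiD phi theta > 0"
  shows "(cmod (Qch k0 r phi theta x z))^2 =
     r * PsiD phi theta / (4 * pi) * (1 / (Dist2 r phi theta x z * sqrt (Dist2 r phi theta x z)))"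
proof -
  define D' where "D' = Dist2 r phi theta x z"
  have ne: "norm (exp (- \<i> * complex_of_real (k0 * D' powr (1/2)))) = 1"
    by (simp add: norm_exp_eq_Re)
  have Dp: "D' > 0" using D unfolding D'_def .
  have pw: "(D' powr (3/4))^2 = D' * sqrt D'"
  proof -
    have "(D' powr (3/4))^2 = D' powr (3/2)" using D unfolding D'_def
      by (simp add: power2_eq_square powr_add[symmetric])
    also have "\<dots> = D' powr 1 * D' powr (1/2)" using powr_add[of D' 1 "1/2"] Dp by simp
    also have "\<dots> = D' * sqrt D'" using D unfolding D'_def by (simp add: powr_half_sqrt)
    finally show ?thesis .
  qed
  have "cmod (Qch k0 r phi theta x z) = sqrt (r * PsiD phi theta) / (sqrt (4*pi) * D' powr (3/4))"
    unfolding Qch_def D'_def[symmetric] using rp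
    by (simp add: norm_mult norm_divide ne)
  hence "(cmod (Qch k0 r phi theta x z))^2 = (sqrt (r * PsiD phi theta))^2 / ((sqrt (4*pi))^2 * (D' powr (3/4))^2)"
    by (simp add: power_divide power_mult_distrib)
  also have "\<dots> = r * PsiD phi theta / (4 * pi * (D' * sqrt D'))" using rp by (simp add: pw)
  finally show ?thesis unfolding D'_def by simp
qed



definition AA :: "real \<Rightarrow> real \<Rightarrow> real \<Rightarrow> real" where
  "AA Ps x z = arctan ((x * z / Ps) / sqrt (Ps^2 + x^2 + z^2))"

lemma AA_odd1: "AA Ps (-x) z = - AA Ps x z" unfolding AA_def by (simp add: arctan_minus[symmetric])
lemma AA_odd2: "AA Ps x (-z) = - AA Ps x z" unfolding AA_def by (simp add: arctan_minus[symmetric])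

lemma AA_scale:
  assumes r: "r > 0" and Ps: "Ps > 0"
  shows "arctan (U * V / (r * Ps * sqrt (U^2 + V^2 + (r * Ps)^2))) = AA Ps (U/r) (V/r)"
proof -
  have "U^2 + V^2 + (r * Ps)^2 = r^2 * (Ps^2 + (U/r)^2 + (V/r)^2)"
    using r by (simp add: field_simps power2_eq_square)
  hence s: "sqrt (U^2 + V^2 + (r * Ps)^2) = r * sqrt (Ps^2 + (U/r)^2 + (V/r)^2)"
    using r by (simp add: real_sqrt_mult)
  have pos: "sqrt (Ps^2 + (U/r)^2 + (V/r)^2) > 0" using Ps by (simp add: add_pos_nonneg)
  show ?thesis unfolding AA_def s using r Ps pos by (simp add: field_simps)
qed

lemma sum2: "(\<Sum>s\<in>{1, -1::real}. f s) = f 1 + f (-1)" by simp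

lemma gain_p_eq:
  "gain_p Lx Lz r phi theta = 1 / (4*pi) *
     (AA (PsiD phi theta) (Lx/(2*r) + PhiD phi theta) (Lz/(2*r) + ThetaD phi theta)
    + AA (PsiD phi theta) (Lx/(2*r) + PhiD phi theta) (Lz/(2*r) - ThetaD phi theta)
    + AA (PsiD phi theta) (Lx/(2*r) - PhiD phi theta) (Lz/(2*r) + ThetaD phi theta)
    + AA (PsiD phi theta) (Lx/(2*r) - PhiD phi theta) (Lz/(2*r) - ThetaD phi theta))"
proof -
  have "gain_p Lx Lz r phi theta = 1 / (4*pi) *
     ((AA (PsiD phi theta) (Lx/(2*r) + 1 * PhiD phi theta) (Lz/(2*r) + 1 * ThetaD phi theta)
    + AA (PsiD phi theta) (Lx/(2*r) + 1 * PhiD phi theta) (Lz/(2*r) + (-1) * ThetaD phi theta))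
    + (AA (PsiD phi theta) (Lx/(2*r) + (-1) * PhiD phi theta) (Lz/(2*r) + 1 * ThetaD phi theta)
    + AA (PsiD phi theta) (Lx/(2*r) + (-1) * PhiD phi theta) (Lz/(2*r) + (-1) * ThetaD phi theta)))"
    unfolding gain_p_def Let_def AA_def sum2 ..
  thus ?thesis by (simp add: add.assoc)
qed



lemma gain_eq:
  assumes Lx: "Lx > 0" and Lz: "Lz > 0" and r: "r > 0" and Ps: "PsiD phi theta > 0"
  shows "gain Lx Lz k0 r phi theta = gain_p Lx Lz r phi theta"
proof -
  define a where "a = r * PhiD phi theta"
  define b where "b = r * ThetaD phi theta"
  define c where "c = r * PsiD phi theta"
  have c: "c > 0" unfolding c_def using r Ps by simp
  define B where "B z = (z-b)^2 + c^2" for z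
  have Bp: "B z > 0" for z unfolding B_def using c by (simp add: add_nonneg_pos)
  have Deq: "Dist2 r phi theta x z = (x-a)^2 + B z" for x z
    unfolding Dist2_eq a_def b_def c_def B_def by simp
  define K where "K = c / (4*pi)"
  define G where "G z u = u / (B z * sqrt (u^2 + B z))" for z u
  have inner: "integral {-Lx/2..Lx/2} (\<lambda>x. (cmod (Qch k0 r phi theta x z))^2)
      = K * G z (Lx/2 - a) - K * G z (-Lx/2 - a)" for z
  proof -
    have "((\<lambda>x. K * (1 / (((x-a)^2 + B z) * sqrt ((x-a)^2 + B z)))) has_integral
          (K * G z (Lx/2 - a) - K * G z (-Lx/2 - a))) {-Lx/2..Lx/2}"
    proof (rule fundamental_theorem_of_calculus[where f="\<lambda>x. K * G z (x - a)"])
      show "-Lx/2 \<le> Lx/2" using Lx by simp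
      fix x assume "x \<in> {-Lx/2..Lx/2}"
      have "((\<lambda>x. K * G z (x - a)) has_real_derivative K * (1 / (((x-a)^2 + B z) * sqrt ((x-a)^2 + B z)))) (at x)"
        unfolding G_def by (rule DERIV_cmult[OF der_inner[OF Bp]])
      thus "((\<lambda>x. K * G z (x - a)) has_vector_derivative K * (1 / (((x-a)^2 + B z) * sqrt ((x-a)^2 + B z)))) (at x within {-Lx/2..Lx/2})"
        by (simp add: has_real_derivative_iff_has_vector_derivative[symmetric] has_field_derivative_at_within)
    qed
    moreover have "(cmod (Qch k0 r phi theta x z))^2 = K * (1 / (((x-a)^2 + B z) * sqrt ((x-a)^2 + B z)))" for x
    proof -
      have "Dist2 r phi theta x z > 0" unfolding Deq using Bp[of z] by (simp add: add_nonneg_pos)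
      from normQ[OF this, folded c_def] show ?thesis unfolding K_def Deq using c by simp
    qed
    ultimately show ?thesis by (simp add: integral_unique)
  qed
  define H where "H U z = arctan (U * (z-b) / (c * sqrt (U^2 + (z-b)^2 + c^2))) / c" for U z
  define U1 where "U1 = -Lx/2 - a"
  define U2 where "U2 = Lx/2 - a"
  have outer: "((\<lambda>z. K * G z U2 - K * G z U1) has_integral
     ((K * H U2 (Lz/2) - K * H U1 (Lz/2)) - (K * H U2 (-Lz/2) - K * H U1 (-Lz/2)))) {-Lz/2..Lz/2}"
  proof (rule fundamental_theorem_of_calculus[where f="\<lambda>z. K * H U2 z - K * H U1 z"])
    show "-Lz/2 \<le> Lz/2" using Lz by simp
    fix z assume "z \<in> {-Lz/2..Lz/2}"
    have GG: "G z U = U / (((z-b)^2+c^2) * sqrt(U^2+(z-b)^2+c^2))" for U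
      unfolding G_def B_def by (simp add: add.assoc)
    have "((\<lambda>z. K * H U2 z - K * H U1 z) has_real_derivative K * G z U2 - K * G z U1) (at z)"
      unfolding GG H_def
      by (intro DERIV_diff DERIV_cmult der_outer[OF c])
    thus "((\<lambda>z. K * H U2 z - K * H U1 z) has_vector_derivative K * G z U2 - K * G z U1) (at z within {-Lz/2..Lz/2})"
      by (simp add: has_real_derivative_iff_has_vector_derivative[symmetric] has_field_derivative_at_within)
  qed
  have "gain Lx Lz k0 r phi theta = integral {-Lz/2..Lz/2} (\<lambda>z. K * G z U2 - K * G z U1)"
    unfolding gain_def inner U1_def U2_def ..
  also have "\<dots> = (K * H U2 (Lz/2) - K * H U1 (Lz/2)) - (K * H U2 (-Lz/2) - K * H U1 (-Lz/2))"
    using outer by (rule integral_unique)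
  also have "\<dots> = gain_p Lx Lz r phi theta"
  proof -
    define Ps where "Ps = PsiD phi theta"
    have cc: "c = r * Ps" unfolding c_def Ps_def ..
    have HA: "H U z = AA Ps (U/r) ((z-b)/r) / c" for U z
      unfolding H_def cc using AA_scale[OF r Ps[folded Ps_def], of U "z-b"] by simp
    have e1: "U2 / r = Lx/(2*r) - PhiD phi theta" unfolding U2_def a_def using r by (simp add: field_simps)
    have e2: "U1 / r = - (Lx/(2*r) + PhiD phi theta)" unfolding U1_def a_def using r by (simp add: field_simps)
    have e3: "(Lz/2 - b) / r = Lz/(2*r) - ThetaD phi theta" unfolding b_def using r by (simp add: field_simps)
    have e4: "(-Lz/2 - b) / r = - (Lz/(2*r) + ThetaD phi theta)" unfolding b_def using r by (simp add: field_simps)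
    show ?thesis unfolding gain_p_eq HA e1 e2 e3 e4 AA_odd1 AA_odd2 K_def Ps_def[symmetric]
      using c by (simp add: field_simps)
  qed
  finally show ?thesis .
qed



lemma corr_p_eq:
  fixes Y Z :: "nat \<Rightarrow> nat \<Rightarrow> complex" and C :: real
  assumes n: "n \<ge> 1"
  shows "complex_of_real (pi^2 * (Lx * Lz) / (4 * (real n)^2 * C)) *
     (\<Sum>j = 1..n. \<Sum>j' = 1..n.
        complex_of_real (sqrt ((1 - (cheb_node n j)^2) * (1 - (cheb_node n j')^2))) * Y j j' * Z j j')
   = complex_of_real (1 / C * (Lx * Lz / 4)) *
     (complex_of_real (pi / real n) * (\<Sum>j' = 1..n. complex_of_real (sqrt (1 - (cheb_node n j')^2)) *
       (complex_of_real (pi / real n) * (\<Sum>j = 1..n. complex_of_real (sqrt (1 - (cheb_node n j)^2)) * (Y j j' * Z j j')))))"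
proof -
  define w where "w j = complex_of_real (sqrt (1 - (cheb_node n j)^2))" for j
  have L: "(\<Sum>j = 1..n. \<Sum>j' = 1..n.
        complex_of_real (sqrt ((1 - (cheb_node n j)^2) * (1 - (cheb_node n j')^2))) * Y j j' * Z j j')
     = (\<Sum>j' = 1..n. \<Sum>j = 1..n. w j' * (w j * (Y j j' * Z j j')))"
    unfolding w_def by (subst sum.swap) (simp add: real_sqrt_mult mult_ac)
  have R: "(\<Sum>j' = 1..n. w j' * (complex_of_real (pi / real n) * (\<Sum>j = 1..n. w j * (Y j j' * Z j j'))))
     = complex_of_real (pi / real n) * (\<Sum>j' = 1..n. \<Sum>j = 1..n. w j' * (w j * (Y j j' * Z j j')))"
    by (simp add: sum_distrib_left mult_ac)
  have CC: "complex_of_real (pi^2 * (Lx * Lz) / (4 * (real n)^2 * C)) =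
     complex_of_real (1 / C * (Lx * Lz / 4)) * complex_of_real (pi / real n) * complex_of_real (pi / real n)"
    unfolding of_real_mult[symmetric] by (simp add: power2_eq_square field_simps)
  show ?thesis unfolding w_def[symmetric] L R CC by (simp add: mult_ac)
qed

lemma corr_eq:
  assumes Lx: "Lx > 0" and Lz: "Lz > 0"
  shows "integral {-Lz/2..Lz/2} (\<lambda>z. integral {-Lx/2..Lx/2} (\<lambda>x. F x z :: complex)) =
     complex_of_real (Lx * Lz / 4) * integral {-1..1} (\<lambda>t'. integral {-1..1} (\<lambda>t. F (Lx * t / 2) (Lz * t' / 2)))"
proof -
  have "integral {-Lz/2..Lz/2} (\<lambda>z. integral {-Lx/2..Lx/2} (\<lambda>x. F x z)) =
        integral {-Lz/2..Lz/2} (\<lambda>z. (Lx/2) *\<^sub>R integral {-1..1} (\<lambda>t. F (Lx * t / 2) z))"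
    by (intro integral_cong scale_int[OF Lx])
  also have "\<dots> = (Lz/2) *\<^sub>R integral {-1..1} (\<lambda>t'. (Lx/2) *\<^sub>R integral {-1..1} (\<lambda>t. F (Lx * t / 2) (Lz * t' / 2)))"
    by (rule scale_int[OF Lz])
  also have "\<dots> = (Lz/2) *\<^sub>R ((Lx/2) *\<^sub>R integral {-1..1} (\<lambda>t'. integral {-1..1} (\<lambda>t. F (Lx * t / 2) (Lz * t' / 2))))"
    by (simp add: integral_scaleR_right)
  also have "\<dots> = complex_of_real (Lx * Lz / 4) * integral {-1..1} (\<lambda>t'. integral {-1..1} (\<lambda>t. F (Lx * t / 2) (Lz * t' / 2)))"
    by (simp add: scaleR_conv_of_real)
  finally show ?thesis .
qed

theorem lemma4:
  fixes Lx Lz k0 :: real and r phi theta :: "nat \<Rightarrow> real" and n :: nat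
  assumes "Lx > 0" and "Lz > 0" and "k0 > 0" and "n \<ge> 1"
    and "\<And>k. k \<in> {1, 2} \<Longrightarrow> r k > 0"
    and "\<And>k. k \<in> {1, 2} \<Longrightarrow> phi k \<in> {0..pi}"
    and "\<And>k. k \<in> {1, 2} \<Longrightarrow> theta k \<in> {0..pi}"
    and "\<And>k. k \<in> {1, 2} \<Longrightarrow> PsiD (phi k) (theta k) > 0"
  shows "(\<forall>k\<in>{1, 2}. gain Lx Lz k0 (r k) (phi k) (theta k) = gain_p Lx Lz (r k) (phi k) (theta k))
    \<and> corr Lx Lz k0 (r 1) (phi 1) (theta 1) (r 2) (phi 2) (theta 2) =
        complex_of_real (1 / sqrt (gain Lx Lz k0 (r 1) (phi 1) (theta 1) * gain Lx Lz k0 (r 2) (phi 2) (theta 2))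
                         * (Lx * Lz / 4)) *
        integral {-1..1} (\<lambda>t'. integral {-1..1} (\<lambda>t.
          cnj (Qch k0 (r 1) (phi 1) (theta 1) (Lx * t / 2) (Lz * t' / 2)) *
          Qch k0 (r 2) (phi 2) (theta 2) (Lx * t / 2) (Lz * t' / 2)))
    \<and> corr_p n Lx Lz k0 (r 1) (phi 1) (theta 1) (r 2) (phi 2) (theta 2) =
        complex_of_real (1 / sqrt (gain_p Lx Lz (r 1) (phi 1) (theta 1) * gain_p Lx Lz (r 2) (phi 2) (theta 2))
                         * (Lx * Lz / 4)) *
        cheb_gauss n (\<lambda>t'. cheb_gauss n (\<lambda>t.
          cnj (Qch k0 (r 1) (phi 1) (theta 1) (Lx * t / 2) (Lz * t' / 2)) *
          Qch k0 (r 2) (phi 2) (theta 2) (Lx * t / 2) (Lz * t' / 2)))"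
  proof -
  have g: "gain Lx Lz k0 (r k) (phi k) (theta k) = gain_p Lx Lz (r k) (phi k) (theta k)" if k: "k \<in> {1, 2}" for k
    by (rule gain_eq[OF assms(1,2) assms(5)[OF k] assms(8)[OF k]])
  have c1: "corr Lx Lz k0 (r 1) (phi 1) (theta 1) (r 2) (phi 2) (theta 2) =
        complex_of_real (1 / sqrt (gain Lx Lz k0 (r 1) (phi 1) (theta 1) * gain Lx Lz k0 (r 2) (phi 2) (theta 2))
                         * (Lx * Lz / 4)) *
        integral {-1..1} (\<lambda>t'. integral {-1..1} (\<lambda>t.
          cnj (Qch k0 (r 1) (phi 1) (theta 1) (Lx * t / 2) (Lz * t' / 2)) *
          Qch k0 (r 2) (phi 2) (theta 2) (Lx * t / 2) (Lz * t' / 2)))"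
    unfolding corr_def corr_eq[OF assms(1,2)] by (simp add: mult.assoc)
  have c2: "corr_p n Lx Lz k0 (r 1) (phi 1) (theta 1) (r 2) (phi 2) (theta 2) =
        complex_of_real (1 / sqrt (gain_p Lx Lz (r 1) (phi 1) (theta 1) * gain_p Lx Lz (r 2) (phi 2) (theta 2))
                         * (Lx * Lz / 4)) *
        cheb_gauss n (\<lambda>t'. cheb_gauss n (\<lambda>t.
          cnj (Qch k0 (r 1) (phi 1) (theta 1) (Lx * t / 2) (Lz * t' / 2)) *
          Qch k0 (r 2) (phi 2) (theta 2) (Lx * t / 2) (Lz * t' / 2)))"
    unfolding corr_p_def cheb_gauss_def by (rule corr_p_eq[OF assms(4)])
  show ?thesis using g c1 c2 by blast
qed

end
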